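(* Let $X$ be a real Banach space with dual $X^*$ and let $T:X\rightrightarrows X^*$ be a set-valued map. If $-T$ is pseudo-monotone, then $T$ is lower sign-continuous at every point of $\operatorname{int}(\operatorname{dom}(T))$.
   Context: $\operatorname{dom}(T)=\{x\in X: T(x)\neq\emptyset\}$ and $\langle\cdot,\cdot\rangle$ is the duality pairing. A set-valued map $S:X\rightrightarrows X^*$ is pseudo-monotone if for all $x,y\in X$: whenever there exists $x^*\in S(x)$ with $\langle x^*,y-x\rangle\geq 0$, then $\langle y^*,x-y\rangle\leq 0$ for all $y^*\in S(y)$ (here $-T$ is the map $x\mapsto\{-x^*: x^*\in T(x)\}$). $T$ is lower sign-continuous at $x\in\operatorname{dom}(T)$ if for every $v\in X$: if $\inf_{x_t^*\in T(x_t)}\langle x_t^*,v\rangle\geq 0$ for all $t\in\,]0,1[$, where $x_t=x+tv$, then $\inf_{x^*\in T(x)}\langle x^*,v\rangle\geq 0$. *)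

theory Defs
  imports "HOL-Analysis.Analysis"
begin

(* Dual space X* = bounded linear functionals (blinfun); pairing = application. *)

definition dom_sv :: "('a \<Rightarrow> 'b set) \<Rightarrow> 'a set" where
  "dom_sv T = {x. T x \<noteq> {}}"

definition neg_sv :: "('a \<Rightarrow> ('a::real_normed_vector \<Rightarrow>\<^sub>L real) set) \<Rightarrow> 'a \<Rightarrow> ('a \<Rightarrow>\<^sub>L real) set" where
  "neg_sv T = (\<lambda>x. uminus ` T x)"

definition pseudo_monotone :: "('a::real_normed_vector \<Rightarrow> ('a \<Rightarrow>\<^sub>L real) set) \<Rightarrow> bool" where
  "pseudo_monotone S \<longleftrightarrow>
     (\<forall>x y. (\<exists>xs\<in>S x. blinfun_apply xs (y - x) \<ge> 0) \<longrightarrow>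
            (\<forall>ys\<in>S y. blinfun_apply ys (x - y) \<le> 0))"

(* Infima taken in the extended reals (inf of empty set = +infinity). *)
definition lower_sign_continuous_at ::
  "('a::real_normed_vector \<Rightarrow> ('a \<Rightarrow>\<^sub>L real) set) \<Rightarrow> 'a \<Rightarrow> bool" where
  "lower_sign_continuous_at T x \<longleftrightarrow>
     (\<forall>v. (\<forall>t\<in>{0<..<1::real}. (INF xs\<in>T (x + t *\<^sub>R v). ereal (blinfun_apply xs v)) \<ge> 0)
          \<longrightarrow> (INF xs\<in>T x. ereal (blinfun_apply xs v)) \<ge> 0)"

end

theory Submission
  imports Defs
begin

theorem proposition6p1:
  fixes T :: "'a::banach \<Rightarrow> ('a \<Rightarrow>\<^sub>L real) set"
  assumes "pseudo_monotone (neg_sv T)"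
  shows "\<forall>x\<in>interior (dom_sv T). lower_sign_continuous_at T x"
proof
  fix x assume "x \<in> interior (dom_sv T)"
  then obtain e where e: "e > 0" "ball x e \<subseteq> dom_sv T"
    using mem_interior by blast
  show "lower_sign_continuous_at T x"
    unfolding lower_sign_continuous_at_def
  proof (intro allI impI)
    fix v
    assume H: "\<forall>t\<in>{0<..<1::real}. (INF xs\<in>T (x + t *\<^sub>R v). ereal (blinfun_apply xs v)) \<ge> 0"
    define t where "t = min (1/2) (e / (2 * (norm v + 1)))"
    have "2 * (norm v + 1) > 0" by (simp add: add_nonneg_pos)
    hence t0: "t > 0" using e by (simp add: t_def)
    have t1: "t < 1" by (simp add: t_def)
    have "norm (t *\<^sub>R v) < e"
    proof -
      have "norm (t *\<^sub>R v) = t * norm v" using t0 by simp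
      also have "\<dots> \<le> (e / (2 * (norm v + 1))) * norm v"
        by (intro mult_right_mono) (auto simp: t_def)
      also have "\<dots> < e"
      proof -
        have "(e / (2 * (norm v + 1))) * norm v = e * (norm v / (2 * (norm v + 1)))" by simp
        also have "\<dots> < e * 1"
          using e(1) by (intro mult_strict_left_mono) (auto simp: divide_less_eq add_nonneg_pos)
        finally show ?thesis by simp
      qed
      finally show ?thesis .
    qed
    hence "x + t *\<^sub>R v \<in> ball x e" by (simp add: dist_norm)
    with e have "T (x + t *\<^sub>R v) \<noteq> {}" by (auto simp: dom_sv_def)
    then obtain ys where ys: "ys \<in> T (x + t *\<^sub>R v)" by blast
    have "ereal (blinfun_apply ys v) \<ge> 0"
      using H t0 t1 ys by (meson INF_lower greaterThanLessThan_iff order_trans)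
    hence ysv: "blinfun_apply ys v \<ge> 0" by simp
    have "\<forall>xs\<in>T x. ereal (blinfun_apply xs v) \<ge> 0"
    proof
      fix xs assume xs: "xs \<in> T x"
      have "-ys \<in> neg_sv T (x + t *\<^sub>R v)" using ys by (simp add: neg_sv_def)
      moreover have "blinfun_apply (-ys) (x - (x + t *\<^sub>R v)) \<ge> 0"
        using ysv t0 by (simp add: blinfun.scaleR_right blinfun.minus_left blinfun.minus_right)
      moreover have "-xs \<in> neg_sv T x" using xs by (simp add: neg_sv_def)
      ultimately have "blinfun_apply (-xs) ((x + t *\<^sub>R v) - x) \<le> 0"
        using assms unfolding pseudo_monotone_def by blast
      hence "t * blinfun_apply xs v \<ge> 0"
        by (simp add: blinfun.scaleR_right blinfun.minus_left)
      hence "blinfun_apply xs v \<ge> 0" using t0 by (simp add: zero_le_mult_iff)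
      thus "ereal (blinfun_apply xs v) \<ge> 0" by simp
    qed
    thus "(INF xs\<in>T x. ereal (blinfun_apply xs v)) \<ge> 0"
      by (simp add: le_INF_iff)
  qed
qed

end
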